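(* If $G$ is a connected locally Dirac graph of order $n \ge 8$, then the minimum degree satisfies $\delta(G) \ge 5$.
   Context: A graph $G$ is locally Dirac if for every vertex $v \in V(G)$ and every $u \in N(v)$, $\deg_{\langle N(v)\rangle}(u) \ge \deg_G(v)/2$, where $N(v)$ is the open neighbourhood of $v$ and $\langle N(v)\rangle$ the subgraph induced by it. *)

theory Defs
  imports Main
begin

definition simple_graph :: "'a set \<Rightarrow> ('a \<Rightarrow> 'a \<Rightarrow> bool) \<Rightarrow> bool" where
  "simple_graph V E \<longleftrightarrow> finite V \<and> (\<forall>u v. E u v \<longrightarrow> u \<in> V \<and> v \<in> V)
     \<and> (\<forall>u v. E u v \<longrightarrow> E v u) \<and> (\<forall>v. \<not> E v v)"

definition nbhd :: "'a set \<Rightarrow> ('a \<Rightarrow> 'a \<Rightarrow> bool) \<Rightarrow> 'a \<Rightarrow> 'a set" where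
  "nbhd V E v = {u \<in> V. E v u}"

definition degree :: "'a set \<Rightarrow> ('a \<Rightarrow> 'a \<Rightarrow> bool) \<Rightarrow> 'a \<Rightarrow> nat" where
  "degree V E v = card (nbhd V E v)"

definition induced_degree :: "'a set \<Rightarrow> ('a \<Rightarrow> 'a \<Rightarrow> bool) \<Rightarrow> 'a \<Rightarrow> nat" where
  "induced_degree S E u = card {w \<in> S. E u w}"

definition connected_graph :: "'a set \<Rightarrow> ('a \<Rightarrow> 'a \<Rightarrow> bool) \<Rightarrow> bool" where
  "connected_graph V E \<longleftrightarrow> (\<forall>u\<in>V. \<forall>v\<in>V. (\<lambda>x y. E x y)\<^sup>*\<^sup>* u v)"

definition locally_dirac :: "'a set \<Rightarrow> ('a \<Rightarrow> 'a \<Rightarrow> bool) \<Rightarrow> bool" where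
  "locally_dirac V E \<longleftrightarrow> (\<forall>v\<in>V. \<forall>u\<in>nbhd V E v.
      2 * induced_degree (nbhd V E v) E u \<ge> degree V E v)"

definition min_degree :: "'a set \<Rightarrow> ('a \<Rightarrow> 'a \<Rightarrow> bool) \<Rightarrow> nat" where
  "min_degree V E = Min (degree V E ` V)"

end

theory Submission
  imports Defs
begin

lemma ld_raw:
  assumes ld: "locally_dirac V E" and a: "a \<in> V" and p: "p \<in> nbhd V E a"
  shows "card (nbhd V E a) \<le> 2 * card {w \<in> nbhd V E a. E p w}"
  using ld a p unfolding locally_dirac_def induced_degree_def degree_def by blast

lemma nb_fin: "simple_graph V E \<Longrightarrow> finite (nbhd V E v)"
  by (rule finite_subset[of _ V]) (auto simp: nbhd_def simple_graph_def)

lemma core_c: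
  assumes sg: "simple_graph V E" and ld: "locally_dirac V E" and a: "a \<in> V"
    and p: "p \<in> nbhd V E a"
  shows "card (nbhd V E a - nbhd V E p - {p}) + 1 \<le> card (nbhd V E a \<inter> nbhd V E p)
     \<and> card (nbhd V E a) = Suc (card (nbhd V E a \<inter> nbhd V E p) + card (nbhd V E a - nbhd V E p - {p}))"
proof -
  let ?A = "nbhd V E a" and ?P = "nbhd V E p"
  have fin: "finite ?A" using nb_fin[OF sg] .
  have pnot: "p \<notin> ?P" using sg by (auto simp: simple_graph_def nbhd_def)
  have eq: "?A = insert p ((?A \<inter> ?P) \<union> (?A - ?P - {p}))" using p by auto
  have c1: "card (insert p ((?A \<inter> ?P) \<union> (?A - ?P - {p}))) = Suc (card ((?A \<inter> ?P) \<union> (?A - ?P - {p})))"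
    by (rule card_insert_disjoint) (use fin pnot in auto)
  have c2: "card ((?A \<inter> ?P) \<union> (?A - ?P - {p})) = card (?A \<inter> ?P) + card (?A - ?P - {p})"
    by (rule card_Un_disjoint) (use fin in auto)
  have "{w \<in> ?A. E p w} = ?A \<inter> ?P" by (auto simp: nbhd_def)
  with ld_raw[OF ld a p] have "card ?A \<le> 2 * card (?A \<inter> ?P)" by simp
  moreover have "card ?A = Suc (card (?A \<inter> ?P) + card (?A - ?P - {p}))"
    using c1 c2 eq by simp
  ultimately show ?thesis by linarith
qed

lemma core_k:
  assumes sg: "simple_graph V E" and ld: "locally_dirac V E" and a: "a \<in> V"
    and p: "p \<in> nbhd V E a" and q: "q \<in> nbhd V E a" and qp: "q \<noteq> p" and nqp: "\<not> E q p"
  shows "2 \<le> card (nbhd V E q \<inter> nbhd V E a \<inter> nbhd V E p)"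
proof -
  let ?A = "nbhd V E a" and ?P = "nbhd V E p" and ?Q = "nbhd V E q"
  let ?R = "?A - ?P - {p}"
  have fin: "finite ?A" using nb_fin[OF sg] .
  have sym: "\<And>x y. E x y \<Longrightarrow> E y x" using sg by (auto simp: simple_graph_def)
  have irr: "\<And>x. \<not> E x x" using sg by (auto simp: simple_graph_def)
  have qR: "q \<in> ?R" using q qp nqp sym by (auto simp: nbhd_def)
  have cc: "card ?R + 1 \<le> card (?A \<inter> ?P)" and dA: "card ?A = Suc (card (?A \<inter> ?P) + card ?R)"
    using core_c[OF sg ld a p] by auto
  have sub: "{w \<in> ?A. E q w} \<subseteq> (?Q \<inter> ?A \<inter> ?P) \<union> (?R - {q})"
    using irr nqp by (auto simp: nbhd_def)
  have "card {w \<in> ?A. E q w} \<le> card ((?Q \<inter> ?A \<inter> ?P) \<union> (?R - {q}))"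
    by (rule card_mono) (use fin sub in auto)
  also have "\<dots> \<le> card (?Q \<inter> ?A \<inter> ?P) + card (?R - {q})" by (rule card_Un_le)
  also have "card (?R - {q}) = card ?R - 1" using qR by simp
  finally have "card {w \<in> ?A. E q w} \<le> card (?Q \<inter> ?A \<inter> ?P) + (card ?R - 1)" .
  moreover have "card ?R \<ge> 1" using qR fin
    by (metis One_nat_def Suc_leI card_gt_0_iff empty_iff finite_Diff)
  moreover note ld_raw[OF ld a q] cc dA
  ultimately show ?thesis by linarith
qed

lemma card_filter_sum: "finite B \<Longrightarrow> card {x \<in> B. P x} = (\<Sum>x\<in>B. if P x then 1 else (0::nat))"
  by (simp add: sum.If_cases Int_def)

theorem mainTheorem6:
  fixes V :: "'a set" and E :: "'a \<Rightarrow> 'a \<Rightarrow> bool"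
  assumes "simple_graph V E"
    and "connected_graph V E"
    and "locally_dirac V E"
    and "card V \<ge> 8"
  shows "min_degree V E \<ge> 5"
proof (rule ccontr)
  note sg = assms(1) and ld = assms(3)
  assume "\<not> 5 \<le> min_degree V E"
  have finV: "finite V" using sg by (simp add: simple_graph_def)
  have neV: "V \<noteq> {}" using assms(4) by auto
  have "min_degree V E \<in> degree V E ` V"
    unfolding min_degree_def using finV neV by (intro Min_in) auto
  then obtain v where v: "v \<in> V" "degree V E v < 5"
    using \<open>\<not> 5 \<le> min_degree V E\<close> by auto
  define A where "A = nbhd V E v"
  have dA: "card A \<le> 4" using v unfolding A_def degree_def by simp
  have sym: "\<And>x y. E x y \<Longrightarrow> E y x" using sg by (auto simp: simple_graph_def)
  have irr: "\<And>x. \<not> E x x" using sg by (auto simp: simple_graph_def)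
  have inV: "\<And>x y. E x y \<Longrightarrow> x \<in> V \<and> y \<in> V" using sg by (auto simp: simple_graph_def)
  have finA: "finite A" unfolding A_def using nb_fin[OF sg] .
  define Out where "Out a = nbhd V E a - A - {v}" for a
  have Obound: "card (Out a) \<le> 2" if aA: "a \<in> A" for a
  proof -
    have aV: "a \<in> V" and vN: "v \<in> nbhd V E a" using aA inV sym v by (auto simp: A_def nbhd_def)
    have "card (Out a) + 1 \<le> card (nbhd V E a \<inter> A)"
      using core_c[OF sg ld aV vN] unfolding Out_def A_def by auto
    also have "\<dots> \<le> card (A - {a})"
      by (rule card_mono) (use finA irr in \<open>auto simp: nbhd_def\<close>)
    also have "\<dots> = card A - 1" using aA by simp
    finally show ?thesis using dA by linarith
  qed
  define B where "B = {x \<in> V. x \<noteq> v \<and> x \<notin> A \<and> (\<exists>a\<in>A. E a x)}"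
  have finB: "finite B" using finV unfolding B_def by auto
  have Mbound: "3 \<le> card {a \<in> A. E a x}" if xB: "x \<in> B" for x
  proof -
    obtain a where aA: "a \<in> A" and ax: "E a x" using xB unfolding B_def by auto
    have aV: "a \<in> V" and vN: "v \<in> nbhd V E a" using aA inV sym v by (auto simp: A_def nbhd_def)
    have xN: "x \<in> nbhd V E a" using ax inV by (auto simp: nbhd_def)
    have xv: "x \<noteq> v" and nxv: "\<not> E x v" using xB v sym unfolding B_def A_def nbhd_def by auto
    have k: "2 \<le> card (nbhd V E x \<inter> nbhd V E a \<inter> nbhd V E v)"
      by (rule core_k[OF sg ld aV vN xN xv nxv])
    have fin2: "finite (nbhd V E x \<inter> nbhd V E a \<inter> nbhd V E v)" using finA unfolding A_def by auto
    have e1: "card (insert a (nbhd V E x \<inter> nbhd V E a \<inter> nbhd V E v)) = Suc (card (nbhd V E x \<inter> nbhd V E a \<inter> nbhd V E v))"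
      using fin2 irr by (auto simp: nbhd_def)
    have e2: "card (insert a (nbhd V E x \<inter> nbhd V E a \<inter> nbhd V E v)) \<le> card {a \<in> A. E a x}"
      by (rule card_mono[OF finite_subset[OF _ finA]]) (use finA aA ax sym in \<open>auto simp: A_def nbhd_def\<close>)
    show ?thesis using e1 e2 k by linarith
  qed
  define S where "S = insert v (A \<union> B)"
  have closed: "t \<in> S" if sS: "s \<in> S" and st: "E s t" for s t
  proof (rule ccontr)
    assume tS: "t \<notin> S"
    have tV: "t \<in> V" using inV st by auto
    have tv: "t \<noteq> v" and tA: "t \<notin> A" and tB: "\<forall>a\<in>A. \<not> E a t"
      using tS tV unfolding S_def B_def by auto
    have "s \<noteq> v" using st tA tV unfolding A_def nbhd_def by auto
    moreover have "s \<notin> A" using st tS tV tv tA unfolding S_def B_def by auto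
    ultimately have sB: "s \<in> B" using sS unfolding S_def by auto
    obtain a where aA: "a \<in> A" and as: "E a s" using sB unfolding B_def by auto
    have sV: "s \<in> V" using sB unfolding B_def by auto
    have aN: "a \<in> nbhd V E s" using as sym inV by (auto simp: nbhd_def)
    have tN: "t \<in> nbhd V E s" using st tV by (auto simp: nbhd_def)
    have ta: "t \<noteq> a" using tA aA by auto
    have nta: "\<not> E t a" using tB aA sym by blast
    have k: "2 \<le> card (nbhd V E t \<inter> nbhd V E s \<inter> nbhd V E a)"
      by (rule core_k[OF sg ld sV aN tN ta nta])
    have sub: "nbhd V E t \<inter> nbhd V E s \<inter> nbhd V E a \<subseteq> Out a - {s}"
    proof
      fix w assume w: "w \<in> nbhd V E t \<inter> nbhd V E s \<inter> nbhd V E a"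
      hence tw: "E t w" and sw: "E s w" and wN: "w \<in> nbhd V E a" by (auto simp: nbhd_def)
      have "w \<notin> A" using tw tB sym by blast
      moreover have "w \<noteq> v" using tw sym tA tV unfolding A_def nbhd_def by auto
      moreover have "w \<noteq> s" using sw irr by auto
      ultimately show "w \<in> Out a - {s}" using wN unfolding Out_def by auto
    qed
    have finO: "finite (Out a)" unfolding Out_def using nb_fin[OF sg] by auto
    have sO: "s \<in> Out a" using sB as sV unfolding Out_def B_def nbhd_def by auto
    have "2 \<le> card (Out a - {s})" using k card_mono[OF _ sub] finO by (meson finite_Diff le_trans)
    with sO finO Obound[OF aA] show False by simp
  qed
  have VS: "V \<subseteq> S"
  proof
    fix u assume uV: "u \<in> V"
    have "(\<lambda>x y. E x y)\<^sup>*\<^sup>* v u" using assms(2) v uV unfolding connected_graph_def by blast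
    then show "u \<in> S"
    proof (induction rule: rtranclp_induct)
      case base then show ?case by (simp add: S_def)
    next
      case (step y z) then show ?case using closed by blast
    qed
  qed
  have "card B * 3 \<le> (\<Sum>x\<in>B. card {a \<in> A. E a x})"
    using sum_bounded_below[of B 3 "\<lambda>x. card {a \<in> A. E a x}"] Mbound by simp
  also have "\<dots> = (\<Sum>x\<in>B. \<Sum>a\<in>A. if E a x then 1 else 0)"
    using card_filter_sum[OF finA] by simp
  also have "\<dots> = (\<Sum>a\<in>A. \<Sum>x\<in>B. if E a x then 1 else 0)" by (rule sum.swap)
  also have "\<dots> = (\<Sum>a\<in>A. card {x \<in> B. E a x})"
    using card_filter_sum[OF finB] by simp
  also have "\<dots> \<le> (\<Sum>a\<in>A. 2)"
  proof (rule sum_mono)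
    fix a assume aA: "a \<in> A"
    have "{x \<in> B. E a x} \<subseteq> Out a" unfolding Out_def B_def nbhd_def by auto
    moreover have "finite (Out a)" unfolding Out_def using nb_fin[OF sg] by auto
    ultimately show "card {x \<in> B. E a x} \<le> 2" using Obound[OF aA] card_mono le_trans by blast
  qed
  also have "\<dots> = 2 * card A" by simp
  finally have cB: "card B \<le> 2" using dA by linarith
  have "card S \<le> Suc (card (A \<union> B))" unfolding S_def by (rule card_insert_le_m1[THEN le_trans]) auto
  hence "card S \<le> 7" using card_Un_le[of A B] dA cB by linarith
  moreover have "card V \<le> card S" using VS finA finB unfolding S_def by (intro card_mono) auto
  ultimately show False using assms(4) by linarith
qed

end
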